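(* Let $a\in\mathcal A$ and let $R$ be the multiset of zeros in $\mathbb C^*$ of the Laurent polynomial $1-aa^*$. Then: (a) $\pi_1^{-1}(a)\subseteq\mathcal S$ is a disjoint union of $\mathcal N(R)$ components, each of the form $\{(a,\lambda z^kb):k\in\mathbb Z,\lambda\in\mathbb T\}$ for some fixed $(a,b)$ in that component; each component is in bijection with $\mathbb Z\times\mathbb T$; (b) if $(a,b),(a,b')\in\pi_1^{-1}(a)$, then $b,b'$ lie in different components if and only if the multisets of zeros in $\mathbb C^*$ of $b$ and $b'$ differ; moreover $b,b'$ have the same zeros on $\mathbb T$ counted with multiplicity; (c) if $b$ is a Laurent polynomial with multiset $R_b$ of zeros in $\mathbb C^*$, then $(a,b)\in\pi_1^{-1}(a)$ implies $R=\bigcup_{\alpha\in R_b}\{\alpha,1/\overline\alpha\}$; conversely, if $R=\bigcup_{\alpha\in R_b}\{\alpha,1/\overline\alpha\}$ then there exists $\lambda\in\mathbb C^*$ with $(a,\lambda b)\in\pi_1^{-1}(a)$.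
   Context: $\mathbb T$ is the unit circle, $\mathbb C^*=\mathbb C\setminus\{0\}$, $a^*(z):=\overline{a(1/\overline z)}$ for a Laurent polynomial $a$. $\mathcal S$ is the set of pairs $(a,b)$ of Laurent polynomials with $aa^*+bb^*=1$ and $0<a^*(0)<\infty$; $\pi_1(a,b)=a$, $\pi_2(a,b)=b$, $\mathcal A:=\pi_1(\mathcal S)$, $\mathcal B:=\pi_2(\mathcal S)$. Multiset unions add multiplicities. Counting function: for a finite multiset $R\subset\mathbb C^*$, define $\alpha\sim\beta$ iff $\alpha=\beta$ or $\alpha=1/\overline\beta$ (equivalence classes taken as multisets, all of even size in the cases considered); for a class $y$ let $\sharp(y):=1$ if $y$ meets $\mathbb T$ and $\sharp(y):=1+|y|/2$ otherwise; $\mathcal N(R):=\prod_{y\in R/\sim}\sharp(y)$. *)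

theory Defs
  imports Complex_Main "HOL-Library.Multiset" "HOL-Computational_Algebra.Polynomial"
begin

text \<open>Laurent polynomials over the complex numbers are represented by their
coefficient functions c :: int => complex with finite support;
c k is the coefficient of z^k.\<close>

definition lpoly :: "(int \<Rightarrow> complex) \<Rightarrow> bool" where
  "lpoly c \<longleftrightarrow> finite {k. c k \<noteq> 0}"

definition lp_eval :: "(int \<Rightarrow> complex) \<Rightarrow> complex \<Rightarrow> complex" where
  "lp_eval c z = (\<Sum>k\<in>{k. c k \<noteq> 0}. c k * z powi k)"

text \<open>a^*(z) = conj (a (1/conj z)); on coefficients: k-th coefficient is conj of the (-k)-th.\<close>
definition lp_star :: "(int \<Rightarrow> complex) \<Rightarrow> int \<Rightarrow> complex" where
  "lp_star c = (\<lambda>k. cnj (c (- k)))"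

definition lp_mul :: "(int \<Rightarrow> complex) \<Rightarrow> (int \<Rightarrow> complex) \<Rightarrow> int \<Rightarrow> complex" where
  "lp_mul c d = (\<lambda>n. \<Sum>k\<in>{k. c k \<noteq> 0}. c k * d (n - k))"

definition lp_add :: "(int \<Rightarrow> complex) \<Rightarrow> (int \<Rightarrow> complex) \<Rightarrow> int \<Rightarrow> complex" where
  "lp_add c d = (\<lambda>n. c n + d n)"

definition lp_sub :: "(int \<Rightarrow> complex) \<Rightarrow> (int \<Rightarrow> complex) \<Rightarrow> int \<Rightarrow> complex" where
  "lp_sub c d = (\<lambda>n. c n - d n)"

definition lp_one :: "int \<Rightarrow> complex" where
  "lp_one = (\<lambda>n. if n = 0 then 1 else 0)"

definition lp_scale_shift :: "complex \<Rightarrow> int \<Rightarrow> (int \<Rightarrow> complex) \<Rightarrow> int \<Rightarrow> complex" where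
  "lp_scale_shift l k c = (\<lambda>n. l * c (n - k))"

text \<open>The polynomial z^(-m) c(z), m the lowest exponent; its zeros in C* are those of c.\<close>
definition lp_to_poly :: "(int \<Rightarrow> complex) \<Rightarrow> complex poly" where
  "lp_to_poly c = (\<Sum>k\<in>{k. c k \<noteq> 0}. monom (c k) (nat (k - Min {k. c k \<noteq> 0})))"

definition lp_zeros :: "(int \<Rightarrow> complex) \<Rightarrow> complex multiset" where
  "lp_zeros c = Abs_multiset (\<lambda>\<alpha>. if \<alpha> = 0 then 0 else order \<alpha> (lp_to_poly c))"

definition S_set :: "((int \<Rightarrow> complex) \<times> (int \<Rightarrow> complex)) set" where
  "S_set = {(a, b). lpoly a \<and> lpoly b \<and>
      lp_add (lp_mul a (lp_star a)) (lp_mul b (lp_star b)) = lp_one \<and>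
      (\<forall>k<0. lp_star a k = 0) \<and> lp_star a 0 \<in> \<real> \<and> Re (lp_star a 0) > 0}"

definition A_set :: "(int \<Rightarrow> complex) set" where
  "A_set = fst ` S_set"

definition component :: "(int \<Rightarrow> complex) \<Rightarrow> (int \<Rightarrow> complex) \<Rightarrow> ((int \<Rightarrow> complex) \<times> (int \<Rightarrow> complex)) set" where
  "component a b = {(a, lp_scale_shift l k b) | k l. cmod l = 1}"

definition zclass :: "complex multiset \<Rightarrow> complex \<Rightarrow> complex multiset" where
  "zclass R \<alpha> = filter_mset (\<lambda>x. x = \<alpha> \<or> x = 1 / cnj \<alpha>) R"

definition class_count :: "complex multiset \<Rightarrow> nat" where
  "class_count y = (if \<exists>x\<in>#y. cmod x = 1 then 1 else 1 + size y div 2)"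

definition NN :: "complex multiset \<Rightarrow> nat" where
  "NN R = (\<Prod>y\<in>zclass R ` set_mset R. class_count y)"

end

theory Submission
  imports Defs "HOL-Computational_Algebra.Fundamental_Theorem_Algebra" "HOL-Library.FuncSet"
begin

definition lp_of :: "int \<Rightarrow> complex poly \<Rightarrow> int \<Rightarrow> complex" where
  "lp_of m p = (\<lambda>n. if m \<le> n then coeff p (nat (n - m)) else 0)"

definition hsh :: "complex poly \<Rightarrow> complex poly" where
  "hsh p = reflect_poly (map_poly cnj p)"

lemma lpoly_lp_of: "lpoly (lp_of m p)"
proof -
  have "{k. lp_of m p k \<noteq> 0} \<subseteq> {m..m + int (degree p)}"
  proof
    fix k assume "k \<in> {k. lp_of m p k \<noteq> 0}"
    then have "m \<le> k" "coeff p (nat (k - m)) \<noteq> 0" by (auto simp: lp_of_def split: if_splits)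
    then have "nat (k - m) \<le> degree p" using le_degree by blast
    then show "k \<in> {m..m + int (degree p)}" using \<open>m \<le> k\<close> by simp
  qed
  then show ?thesis unfolding lpoly_def using finite_subset by blast
qed

lemma lp_of_0 [simp]: "lp_of m 0 = (\<lambda>_. 0)"
  by (simp add: lp_of_def fun_eq_iff)

lemma lp_of_eq_0_iff: "lp_of m p = (\<lambda>_. 0) \<longleftrightarrow> p = 0"
proof
  assume h: "lp_of m p = (\<lambda>_. 0)"
  show "p = 0"
  proof (rule poly_eqI)
    fix i
    have "lp_of m p (m + int i) = 0" using h by simp
    then show "coeff p i = coeff 0 i" by (simp add: lp_of_def)
  qed
qed simp

lemma lp_mul_finite_sum:
  assumes "finite A" "{k. c k \<noteq> 0} \<subseteq> A"
  shows "lp_mul c d n = (\<Sum>k\<in>A. c k * d (n - k))"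
  unfolding lp_mul_def using assms by (intro sum.mono_neutral_left) auto

lemma lp_mul_lp_of: "lp_mul (lp_of m p) (lp_of m' q) = lp_of (m + m') (p * q)"
proof
  fix n
  define A where "A = (\<lambda>i. m + int i) ` {..degree p}"
  have fA: "finite A" by (simp add: A_def)
  have sub: "{k. lp_of m p k \<noteq> 0} \<subseteq> A"
  proof
    fix k assume "k \<in> {k. lp_of m p k \<noteq> 0}"
    then have "m \<le> k" "coeff p (nat (k - m)) \<noteq> 0" by (auto simp: lp_of_def split: if_splits)
    then have "nat (k - m) \<le> degree p" using le_degree by blast
    then show "k \<in> A" unfolding A_def using \<open>m \<le> k\<close>
      by (intro image_eqI[of _ _ "nat (k - m)"]) auto
  qed
  have "lp_mul (lp_of m p) (lp_of m' q) n = (\<Sum>k\<in>A. lp_of m p k * lp_of m' q (n - k))"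
    by (rule lp_mul_finite_sum[OF fA sub])
  also have "\<dots> = (\<Sum>i\<le>degree p. lp_of m p (m + int i) * lp_of m' q (n - (m + int i)))"
    unfolding A_def by (subst sum.reindex) (auto simp: inj_on_def)
  also have "\<dots> = (\<Sum>i\<le>degree p. coeff p i * lp_of m' q (n - m - int i))"
    by (simp add: lp_of_def algebra_simps)
  also have "\<dots> = lp_of (m + m') (p * q) n"
  proof (cases "m + m' \<le> n")
    case True
    define N where "N = nat (n - m - m')"
    have e: "nat (n - m - int i - m') = N - i" if "i \<le> N" for i
      using True that unfolding N_def by linarith
    have e2: "m' \<le> n - m - int i \<longleftrightarrow> i \<le> N" for i
      using True unfolding N_def by linarith
    have "(\<Sum>i\<le>degree p. coeff p i * lp_of m' q (n - m - int i))
        = (\<Sum>i\<le>degree p. if i \<le> N then coeff p i * coeff q (N - i) else 0)"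
      by (intro sum.cong) (auto simp: lp_of_def e e2)
    also have "\<dots> = (\<Sum>i\<in>{..degree p} \<inter> {..N}. coeff p i * coeff q (N - i))"
        by (subst sum.inter_restrict) auto
    also have "\<dots> = (\<Sum>i\<le>N. coeff p i * coeff q (N - i))"
      by (intro sum.mono_neutral_left) (auto simp: coeff_eq_0)
    also have "\<dots> = coeff (p * q) N" by (simp add: coeff_mult)
    finally show ?thesis using True by (simp add: lp_of_def N_def algebra_simps)
  next
    case False
    then show ?thesis by (auto simp: lp_of_def intro!: sum.neutral)
  qed
  finally show "lp_mul (lp_of m p) (lp_of m' q) n = lp_of (m + m') (p * q) n" .
qed

lemma degree_map_cnj [simp]: "degree (map_poly cnj p) = degree p"
  by (rule degree_map_poly) simp

lemma coeff_map_cnj [simp]: "coeff (map_poly cnj p) i = cnj (coeff p i)"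
  by (simp add: coeff_map_poly)

lemma coeff_hsh: "coeff (hsh p) n = (if n > degree p then 0 else cnj (coeff p (degree p - n)))"
  by (simp add: hsh_def coeff_reflect_poly)

lemma lp_star_lp_of: "lp_star (lp_of m p) = lp_of (- m - int (degree p)) (hsh p)"
proof
  fix k
  show "lp_star (lp_of m p) k = lp_of (- m - int (degree p)) (hsh p) k"
  proof (cases "m \<le> -k")
    case True
    have e1: "\<not> degree p < nat (k - (- m - int (degree p)))" using True by linarith
    have e3: "- m - int (degree p) \<le> k \<or> degree p < nat (- k - m)" using True by linarith
    show ?thesis
    proof (cases "- m - int (degree p) \<le> k")
      case True2: True
      have e2: "degree p - nat (k - (- m - int (degree p))) = nat (- k - m)" using True True2 by linarith
      then show ?thesis using True e1 e2 by (simp add: lp_star_def lp_of_def coeff_hsh)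
    next
      case False
      then have "degree p < nat (- k - m)" using e3 by simp
      then show ?thesis using True False by (simp add: lp_star_def lp_of_def coeff_eq_0)
    qed
  next
    case False
    have "\<not> - m - int (degree p) \<le> k \<or> degree p < nat (k - (- m - int (degree p)))"
      using False by linarith
    then show ?thesis using False
      by (auto simp: lp_star_def lp_of_def coeff_hsh)
  qed
qed

lemma lp_add_lp_of: "lp_add (lp_of m p) (lp_of m q) = lp_of m (p + q)"
  by (auto simp: lp_add_def lp_of_def)

lemma lp_sub_lp_of: "lp_sub (lp_of m p) (lp_of m q) = lp_of m (p - q)"
  by (auto simp: lp_sub_def lp_of_def)

lemma lp_one_lp_of: "lp_one = lp_of 0 1"
  by (auto simp: lp_one_def lp_of_def coeff_1 nat_eq_iff)

lemma lp_of_shift: "lp_of m p = lp_of (m - int j) (monom 1 j * p)"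
proof
  fix n
  show "lp_of m p n = lp_of (m - int j) (monom 1 j * p) n"
  proof (cases "m \<le> n")
    case True
    have "nat (n - (m - int j)) = nat (n - m) + j" using True by linarith
    then show ?thesis using True by (simp add: lp_of_def coeff_monom_mult)
  next
    case False
    have "nat (n - (m - int j)) < j" if "m - int j \<le> n" using False that by linarith
    then show ?thesis using False by (auto simp: lp_of_def coeff_monom_mult)
  qed
qed



lemma lp_scale_shift_lp_of: "lp_scale_shift l k (lp_of m p) = lp_of (m + k) (smult l p)"
proof
  fix n
  have "nat (n - k - m) = nat (n - (m + k))" by (simp add: algebra_simps)
  moreover have "m \<le> n - k \<longleftrightarrow> m + k \<le> n" by linarith
  ultimately show "lp_scale_shift l k (lp_of m p) n = lp_of (m + k) (smult l p) n"
    by (simp add: lp_scale_shift_def lp_of_def)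
qed

lemma lp_of_smult: "lp_of m (smult c p) = (\<lambda>n. c * lp_of m p n)"
  by (auto simp: lp_of_def)


lemma lp_of_inj:
  assumes "lp_of m p = lp_of m' q" "coeff p 0 \<noteq> 0" "coeff q 0 \<noteq> 0"
  shows "m = m' \<and> p = q"
proof -
  have "m = m'"
  proof (rule ccontr)
    assume "m \<noteq> m'"
    then consider "m < m'" | "m' < m" by linarith
    then show False
    proof cases
      case 1
      have "lp_of m p m = lp_of m' q m" using assms(1) by simp
      then show False using 1 assms(2) by (simp add: lp_of_def)
    next
      case 2
      have "lp_of m p m' = lp_of m' q m'" using assms(1) by simp
      then show False using 2 assms(3) by (simp add: lp_of_def)
    qed
  qed
  moreover have "p = q"
  proof (rule poly_eqI)
    fix i
    have "lp_of m p (m + int i) = lp_of m' q (m + int i)" using assms(1) by simp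
    then show "coeff p i = coeff q i" using \<open>m = m'\<close> by (simp add: lp_of_def)
  qed
  ultimately show ?thesis by simp
qed


lemma lp_normal_form:
  assumes "lpoly c" "c \<noteq> (\<lambda>_. 0)"
  shows "\<exists>m p. coeff p 0 \<noteq> 0 \<and> c = lp_of m p"
proof -
  define A where "A = {k. c k \<noteq> 0}"
  have fA: "finite A" using assms(1) by (simp add: lpoly_def A_def)
  have neA: "A \<noteq> {}" using assms(2) by (auto simp: A_def)
  define m where "m = Min A"
  define N where "N = nat (Max A - m)"
  define p where "p = (\<Sum>i\<le>N. monom (c (m + int i)) i)"
  have cp: "coeff p i = (if i \<le> N then c (m + int i) else 0)" for i
    by (simp add: p_def coeff_sum coeff_monom)
  have "c m \<noteq> 0" using Min_in[OF fA neA] by (simp add: m_def A_def)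
  moreover have "c = lp_of m p"
  proof
    fix n
    show "c n = lp_of m p n"
    proof (cases "m \<le> n")
      case True
      show ?thesis
      proof (cases "n \<le> Max A")
        case True2: True
        then show ?thesis using True by (simp add: lp_of_def cp N_def)
      next
        case False
        then have "n \<notin> A" using Max_ge[OF fA] by force
        have "m \<le> Max A" unfolding m_def using Min_le[OF fA Max_in[OF fA neA]] .
        then have "\<not> nat (n - m) \<le> N" using False True unfolding N_def by linarith
        then show ?thesis using True \<open>n \<notin> A\<close> by (auto simp: lp_of_def cp A_def)
      qed
    next
      case False
      then have "n \<notin> A" using Min_le[OF fA] m_def by force
      then show ?thesis using False by (auto simp: lp_of_def A_def)
    qed
  qed
  ultimately show ?thesis
    by (intro exI[of _ m] exI[of _ p]) (simp add: cp)
qed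


lemma lp_to_poly_lp_of:
  assumes "coeff p 0 \<noteq> 0"
  shows "lp_to_poly (lp_of m p) = p"
proof -
  have p0: "p \<noteq> 0" using assms by auto
  let ?S = "{k. lp_of m p k \<noteq> 0}"
  have S: "?S = (\<lambda>i. m + int i) ` {i. coeff p i \<noteq> 0}"
    by (auto simp: lp_of_def split: if_splits intro!: image_eqI[of _ _ "nat (_ - m)"])
  have "Min ?S = m"
  proof (rule Min_eqI)
    show "finite ?S" using lpoly_lp_of by (simp add: lpoly_def)
    show "m \<in> ?S" using assms by (simp add: lp_of_def)
  qed (auto simp: lp_of_def split: if_splits)
  then have "lp_to_poly (lp_of m p) = (\<Sum>k\<in>?S. monom (lp_of m p k) (nat (k - m)))"
    by (simp add: lp_to_poly_def)
  also have "\<dots> = (\<Sum>i\<in>{i. coeff p i \<noteq> 0}. monom (coeff p i) i)"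
    unfolding S by (subst sum.reindex) (auto simp: inj_on_def lp_of_def)
  also have "\<dots> = (\<Sum>i\<le>degree p. monom (coeff p i) i)"
    by (intro sum.mono_neutral_left) (auto simp: le_degree)
  also have "\<dots> = p" by (rule poly_as_sum_of_monoms)
  finally show ?thesis .
qed


lemma lp_zeros_lp_of:
  assumes "coeff p 0 \<noteq> 0"
  shows "lp_zeros (lp_of m p) = proots p"
proof -
  have p0: "p \<noteq> 0" using assms by auto
  have "poly p 0 \<noteq> 0" using assms by (simp add: poly_0_coeff_0)
  then have o0: "order 0 p = 0" by (simp add: order_root)
  have "(\<lambda>\<alpha>. if \<alpha> = 0 then 0 else order \<alpha> (lp_to_poly (lp_of m p))) = count (proots p)"
    using o0 p0 by (auto simp: lp_to_poly_lp_of[OF assms])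
  then show ?thesis by (simp add: lp_zeros_def count_inverse)
qed




lemma map_poly_cnj_mult: "map_poly cnj (p * q) = map_poly cnj p * map_poly cnj q"
  by (rule poly_eqI) (simp add: coeff_mult)

lemma map_poly_cnj_smult: "map_poly cnj (smult c p) = smult (cnj c) (map_poly cnj p)"
  by (rule poly_eqI) simp

lemma map_poly_cnj_eq_0 [simp]: "map_poly cnj p = 0 \<longleftrightarrow> p = 0"
  by (metis coeff_map_cnj complex_cnj_zero_iff leading_coeff_0_iff degree_map_cnj)

lemma hsh_mult: "hsh (p * q) = hsh p * hsh q"
  by (simp add: hsh_def map_poly_cnj_mult reflect_poly_mult)

lemma hsh_smult: "hsh (smult c p) = smult (cnj c) (hsh p)"
  by (simp add: hsh_def map_poly_cnj_smult reflect_poly_smult)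

lemma coeff0_ne: "coeff (p :: complex poly) 0 \<noteq> 0 \<Longrightarrow> p \<noteq> 0"
  by (metis coeff_0)

lemma prod_linear_ne0: "(\<Prod>x\<in>#Z. [:-x, 1:]) \<noteq> (0 :: complex poly)"
proof (induction Z)
  case (add x Z)
  have lin: "[:-x, 1:] \<noteq> (0 :: complex poly)" by simp
  have "(\<Prod>x\<in>#add_mset x Z. [:-x, 1:]) = [:-x, 1:] * (\<Prod>x\<in>#Z. [:-x, 1:])"
    by (simp only: image_mset_add_mset prod_mset.add_mset)
  then show ?case using add.IH lin by (metis mult_eq_0_iff)
qed simp

lemma hsh_eq_0 [simp]: "hsh p = 0 \<longleftrightarrow> p = 0"
  by (simp add: hsh_def)

lemma coeff_0_hsh: "coeff (hsh p) 0 = cnj (lead_coeff p)"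
  by (simp add: coeff_hsh)

lemma degree_hsh: "coeff p 0 \<noteq> 0 \<Longrightarrow> degree (hsh p) = degree p"
  by (simp add: hsh_def)

lemma hsh_linear:
  assumes "z \<noteq> 0"
  shows "hsh [:-z, 1:] = smult (- cnj z) [:- (1 / cnj z), 1:]"
proof (rule poly_eqI)
  fix n
  show "coeff (hsh [:-z, 1:]) n = coeff (smult (- cnj z) [:- (1 / cnj z), 1:]) n"
    using assms by (cases n) (auto simp: coeff_hsh coeff_pCons split: nat.splits)
qed

lemma proots_hsh_prod:
  assumes "0 \<notin># Z"
  shows "proots (hsh (\<Prod>x\<in>#Z. [:-x, 1:])) = image_mset (\<lambda>z. 1 / cnj z) Z"
  using assms
proof (induction Z)
  case empty
  then show ?case by (simp add: hsh_def)
next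
  case (add x Z)
  have x0: "x \<noteq> 0" using add.prems by auto
  have ne: "hsh (\<Prod>x\<in>#Z. [:-x, 1:]) \<noteq> 0" using prod_linear_ne0 by simp
  have eq: "hsh (\<Prod>x\<in>#add_mset x Z. [:-x, 1:]) = smult (- cnj x) [:- (1 / cnj x), 1:] * hsh (\<Prod>x\<in>#Z. [:-x, 1:])"
    by (simp only: image_mset_add_mset prod_mset.add_mset hsh_mult hsh_linear[OF x0])
  have ne2: "smult (- cnj x) [:- (1 / cnj x), 1:] \<noteq> 0" using x0 by simp
  have pl0: "proots [:- (1 / cnj x), 1:] = {# 1 / cnj x #}"
    by (metis minus_minus proots_linear_factor)
  have pl: "proots (smult (- cnj x) [:- (1 / cnj x), 1:]) = {# 1 / cnj x #}"
    by (metis pl0 proots_smult neg_equal_0_iff_equal complex_cnj_zero_iff x0)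
  have "proots (hsh (\<Prod>x\<in>#add_mset x Z. [:-x, 1:])) = {# 1 / cnj x #} + proots (hsh (\<Prod>x\<in>#Z. [:-x, 1:]))"
    unfolding eq proots_mult[OF ne2 ne] pl ..
  then show ?case using add by simp
qed

lemma coeff0_proots: "coeff (p :: complex poly) 0 \<noteq> 0 \<Longrightarrow> 0 \<notin># proots p"
proof -
  assume a: "coeff p 0 \<noteq> 0"
  then have "p \<noteq> 0" by (rule coeff0_ne)
  then show ?thesis using a by (simp add: poly_0_coeff_0)
qed

lemma proots_hsh:
  assumes "coeff p 0 \<noteq> 0"
  shows "proots (hsh p) = image_mset (\<lambda>z. 1 / cnj z) (proots p)"
proof -
  have p0: "p \<noteq> 0" using assms by (rule coeff0_ne)
  have "hsh p = hsh (smult (lead_coeff p) (\<Prod>x\<in>#proots p. [:-x, 1:]))"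
    by (simp add: complex_poly_decompose_multiset)
  also have "\<dots> = smult (cnj (lead_coeff p)) (hsh (\<Prod>x\<in>#proots p. [:-x, 1:]))"
    by (simp add: hsh_smult)
  finally have "proots (hsh p) = proots (hsh (\<Prod>x\<in>#proots p. [:-x, 1:]))"
    using p0 by simp
  also have "\<dots> = image_mset (\<lambda>z. 1 / cnj z) (proots p)"
    by (rule proots_hsh_prod[OF coeff0_proots[OF assms]])
  finally show ?thesis .
qed

lemma same_proots:
  fixes p q :: "complex poly"
  assumes "p \<noteq> 0" "q \<noteq> 0" "proots p = proots q"
  shows "p = smult (lead_coeff p / lead_coeff q) q"
proof -
  have "smult (lead_coeff p / lead_coeff q) q
      = smult (lead_coeff p / lead_coeff q) (smult (lead_coeff q) (\<Prod>x\<in>#proots q. [:-x, 1:]))"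
    by (simp add: complex_poly_decompose_multiset)
  also have "\<dots> = smult (lead_coeff p) (\<Prod>x\<in>#proots p. [:-x, 1:])"
    using assms by simp
  also have "\<dots> = p" by (rule complex_poly_decompose_multiset)
  finally show ?thesis by simp
qed

lemma proots_prod_linear:
  "proots (\<Prod>x\<in>#Z. [:-x, 1:]) = (Z :: complex multiset)"
proof (induction Z)
  case (add x Z)
  have "(\<Prod>x\<in>#add_mset x Z. [:-x, 1:]) = [:-x, 1:] * (\<Prod>x\<in>#Z. [:-x, 1:])"
    by (simp only: image_mset_add_mset prod_mset.add_mset)
  also have "proots \<dots> = proots [:-x, 1:] + proots (\<Prod>x\<in>#Z. [:-x, 1:])"
    by (rule proots_mult[OF _ prod_linear_ne0]) simp
  finally show ?case using add by simp
qed simp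

lemma coeff0_prod_linear:
  assumes "0 \<notin># (Z :: complex multiset)"
  shows "coeff (\<Prod>x\<in>#Z. [:-x, 1:]) 0 \<noteq> 0"
  using assms
proof -
  have "poly (\<Prod>x\<in>#Z. [:-x, 1:]) 0 \<noteq> 0"
    using assms by (simp add: poly_prod_mset prod_mset_zero_iff) (auto)
  then show ?thesis by (simp add: poly_0_coeff_0)
qed

lemma lp_mul_zero_left: "lp_mul (\<lambda>_. 0) d = (\<lambda>_. 0)"
  by (simp add: lp_mul_def)

lemma bbstar_lp_of:
  "lp_mul (lp_of m p) (lp_star (lp_of m p)) = lp_of (- int (degree p)) (p * hsh p)"
  by (simp add: lp_star_lp_of lp_mul_lp_of)

lemma coeff0_bbstar:
  assumes "coeff p 0 \<noteq> 0"
  shows "coeff (p * hsh p) 0 \<noteq> 0"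
  using assms coeff0_ne[OF assms] by (simp add: coeff_mult_0 coeff_0_hsh)

lemma zeros_bbstar:
  assumes "coeff p 0 \<noteq> 0"
  shows "lp_zeros (lp_mul (lp_of m p) (lp_star (lp_of m p)))
     = proots p + image_mset (\<lambda>z. 1 / cnj z) (proots p)"
proof -
  have "p \<noteq> 0" "hsh p \<noteq> 0" using coeff0_ne[OF assms] by auto
  then show ?thesis
    using assms by (simp add: bbstar_lp_of lp_zeros_lp_of[OF coeff0_bbstar[OF assms]] proots_mult proots_hsh)
qed

lemma bbstar_at0:
  assumes "lpoly b"
  shows "lp_mul b (lp_star b) 0 = of_real (\<Sum>k\<in>{k. b k \<noteq> 0}. (cmod (b k))\<^sup>2)"
proof -
  have "lp_mul b (lp_star b) 0 = (\<Sum>k\<in>{k. b k \<noteq> 0}. b k * cnj (b k))"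
    by (simp add: lp_mul_def lp_star_def)
  also have "\<dots> = (\<Sum>k\<in>{k. b k \<noteq> 0}. of_real ((cmod (b k))\<^sup>2))"
    by (intro sum.cong refl) (simp add: complex_norm_square[symmetric])
  finally show ?thesis by simp
qed

lemma bbstar_at0_pos:
  assumes "lpoly b" "b \<noteq> (\<lambda>_. 0)"
  shows "(\<Sum>k\<in>{k. b k \<noteq> 0}. (cmod (b k))\<^sup>2) > 0"
proof -
  obtain k where k: "b k \<noteq> 0" using assms(2) by auto
  have fin: "finite {k. b k \<noteq> 0}" using assms(1) by (simp add: lpoly_def)
  have "0 < (cmod (b k))\<^sup>2" using k by simp
  also have "\<dots> \<le> (\<Sum>k\<in>{k. b k \<noteq> 0}. (cmod (b k))\<^sup>2)"
    using k fin by (intro member_le_sum) auto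
  finally show ?thesis .
qed



definition rho :: "complex \<Rightarrow> complex" where "rho z = 1 / cnj z"

lemma rho_rho [simp]: "rho (rho z) = z"
  by (simp add: rho_def)

lemma rho_eq_iff: "rho x = y \<longleftrightarrow> x = rho y"
  by (metis rho_rho)

lemma rho_0_iff [simp]: "rho z = 0 \<longleftrightarrow> z = 0"
  by (simp add: rho_def)

lemma rho_fix_iff: "z \<noteq> 0 \<Longrightarrow> rho z = z \<longleftrightarrow> cmod z = 1"
proof -
  assume z: "z \<noteq> 0"
  have "rho z = z \<longleftrightarrow> z * cnj z = 1" using z by (auto simp: rho_def field_simps)
  also have "\<dots> \<longleftrightarrow> (cmod z)\<^sup>2 = 1"
    by (metis complex_norm_square of_real_eq_1_iff of_real_power)
  also have "\<dots> \<longleftrightarrow> cmod z = 1" by (metis norm_ge_zero one_power2 power2_eq_iff_nonneg zero_le_one)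
  finally show "rho z = z \<longleftrightarrow> cmod z = 1" .
qed

lemma cmod_rho: "cmod (rho z) = 1 / cmod z"
  by (simp add: rho_def norm_divide)

lemma count_image_rho: "count (image_mset rho Z) x = count Z (rho x)"
proof -
  have "rho -` {x} = {rho x}" by (auto simp: rho_eq_iff)
  then show ?thesis
    by (cases "rho x \<in># Z") (auto simp: count_image_mset not_in_iff)
qed

definition Sols :: "complex multiset \<Rightarrow> complex multiset set" where
  "Sols R = {Z. 0 \<notin># Z \<and> Z + image_mset rho Z = R}"

lemma Sols_count:
  "Z \<in> Sols R \<longleftrightarrow> count Z 0 = 0 \<and> (\<forall>x. count Z x + count Z (rho x) = count R x)"
  unfolding Sols_def
  by (auto simp: multiset_eq_iff count_image_rho count_eq_zero_iff)

lemma Sols_sub: "Z \<in> Sols R \<Longrightarrow> Z \<subseteq># R"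
  by (auto simp: Sols_def)

lemma Sols_R0: "Z \<in> Sols R \<Longrightarrow> count R 0 = 0"
  by (auto simp: Sols_count) (metis add.right_neutral rho_0_iff rho_rho)

lemma Sols_empty: "Sols {#} = {{#}}"
  by (auto simp: Sols_def)

lemma filter_all: "\<forall>x\<in>#X. P x \<Longrightarrow> filter_mset P X = X"
  by (induction X) auto

lemma filter_none: "\<forall>x\<in>#X. \<not> P x \<Longrightarrow> filter_mset P X = {#}"
  by (induction X) auto

lemma Sols_split:
  assumes Q: "\<And>x. Q (rho x) = Q x"
  shows "bij_betw (\<lambda>Z. (filter_mset Q Z, filter_mset (\<lambda>x. \<not> Q x) Z)) (Sols R)
           (Sols (filter_mset Q R) \<times> Sols (filter_mset (\<lambda>x. \<not> Q x) R))"
proof -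
  have fimg: "filter_mset P (image_mset rho Z) = image_mset rho (filter_mset P Z)"
    if "\<And>x. P (rho x) = P x" for P Z
    using image_mset_filter_mset_swap[of rho P Z] that by simp
  have Q': "\<And>x. (\<not> Q (rho x)) = (\<not> Q x)" using Q by simp
  have all: "\<forall>x\<in>#X. P x" if "X \<in> Sols (filter_mset P R)" for X P
    using Sols_sub[OF that] by (auto dest: mset_subset_eqD)
  show ?thesis
  proof (rule bij_betwI[where g = "\<lambda>(X, Y). X + Y"])
    show "(\<lambda>Z. (filter_mset Q Z, filter_mset (\<lambda>x. \<not> Q x) Z)) \<in> Sols R \<rightarrow>
        Sols (filter_mset Q R) \<times> Sols (filter_mset (\<lambda>x. \<not> Q x) R)"
    proof
      fix Z assume Z: "Z \<in> Sols R"
      have a: "filter_mset Q Z \<in> Sols (filter_mset Q R)"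
        using Z unfolding Sols_def by (auto simp: fimg[of Q, OF Q, symmetric])
      have b: "filter_mset (\<lambda>x. \<not> Q x) Z \<in> Sols (filter_mset (\<lambda>x. \<not> Q x) R)"
        using Z unfolding Sols_def by (auto simp: fimg[of "\<lambda>x. \<not> Q x", OF Q', symmetric])
      show "(filter_mset Q Z, filter_mset (\<lambda>x. \<not> Q x) Z) \<in>
          Sols (filter_mset Q R) \<times> Sols (filter_mset (\<lambda>x. \<not> Q x) R)" using a b by simp
    qed
    show "(\<lambda>(X, Y). X + Y) \<in> Sols (filter_mset Q R) \<times> Sols (filter_mset (\<lambda>x. \<not> Q x) R) \<rightarrow> Sols R"
    proof
      fix XY assume XYin: "XY \<in> Sols (filter_mset Q R) \<times> Sols (filter_mset (\<lambda>x. \<not> Q x) R)"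
      obtain X Y where XY0: "XY = (X, Y)" by (cases XY)
      have XY: "XY = (X, Y)" "X \<in> Sols (filter_mset Q R)"
          "Y \<in> Sols (filter_mset (\<lambda>x. \<not> Q x) R)" using XYin XY0 by auto
      have "X + Y + image_mset rho (X + Y) = (X + image_mset rho X) + (Y + image_mset rho Y)"
        by (simp add: add_ac)
      also have "\<dots> = R" using XY(2,3) by (simp add: Sols_def multiset_partition[symmetric])
      finally show "(case XY of (X, Y) \<Rightarrow> X + Y) \<in> Sols R"
        using XY by (auto simp: Sols_def)
    qed
    show "(case (filter_mset Q Z, filter_mset (\<lambda>x. \<not> Q x) Z) of (X, Y) \<Rightarrow> X + Y) = Z" for Z
      by (simp add: multiset_partition[symmetric])
    show "(filter_mset Q (case XY of (X, Y) \<Rightarrow> X + Y),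
           filter_mset (\<lambda>x. \<not> Q x) (case XY of (X, Y) \<Rightarrow> X + Y)) = XY"
      if "XY \<in> Sols (filter_mset Q R) \<times> Sols (filter_mset (\<lambda>x. \<not> Q x) R)" for XY
    proof -
      obtain X Y where XY0: "XY = (X, Y)" by (cases XY)
      have XY: "XY = (X, Y)" "X \<in> Sols (filter_mset Q R)"
          "Y \<in> Sols (filter_mset (\<lambda>x. \<not> Q x) R)" using that XY0 by auto
      have "\<forall>x\<in>#X. Q x" using all[OF XY(2)] .
      moreover have "\<forall>x\<in>#Y. \<not> Q x" using all[OF XY(3)] .
      ultimately have "filter_mset Q (X + Y) = X" "filter_mset (\<lambda>x. \<not> Q x) (X + Y) = Y"
        by (simp_all add: filter_all filter_none)
      then show ?thesis using XY(1) by simp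
    qed
  qed
qed




lemma one_class:
  assumes Z0: "Z0 \<in> Sols R" and a: "\<alpha> \<in># R" and cls: "\<forall>x\<in>#R. x = \<alpha> \<or> x = rho \<alpha>"
  shows "finite (Sols R) \<and> card (Sols R) = class_count R"
proof -
  have R0: "count R 0 = 0" by (rule Sols_R0[OF Z0])
  have a0: "\<alpha> \<noteq> 0" using a R0 by (metis count_eq_zero_iff)
  have out: "count R x = 0" if "x \<noteq> \<alpha>" "x \<noteq> rho \<alpha>" for x
    using cls that by (meson count_eq_zero_iff)
  have le: "count Z x \<le> count R x" if "Z \<in> Sols R" for Z x
    using Sols_sub[OF that] by (simp add: subseteq_mset_def)
  show ?thesis
  proof (cases "rho \<alpha> = \<alpha>")
    case True
    have "Sols R = {Z0}"
    proof
      show "Sols R \<subseteq> {Z0}"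
      proof
        fix Z assume Z: "Z \<in> Sols R"
        have "Z = Z0"
        proof (rule multiset_eqI)
          fix x
          show "count Z x = count Z0 x"
          proof (cases "x = \<alpha>")
            case True
            have "count Z \<alpha> + count Z \<alpha> = count R \<alpha>" "count Z0 \<alpha> + count Z0 \<alpha> = count R \<alpha>"
              using Z Z0 \<open>rho \<alpha> = \<alpha>\<close> unfolding Sols_count by metis+
            then show ?thesis using True by simp
          next
            case False
            then show ?thesis using le[OF Z, of x] le[OF Z0, of x] out[of x] \<open>rho \<alpha> = \<alpha>\<close> by simp
          qed
        qed
        then show "Z \<in> {Z0}" by simp
      qed
    qed (use Z0 in simp)
    moreover have "class_count R = 1"
      using a True rho_fix_iff[OF a0] by (auto simp: class_count_def)
    ultimately show ?thesis by simp
  next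
    case False
    define \<beta> where "\<beta> = rho \<alpha>"
    have b0: "\<beta> \<noteq> 0" using a0 by (simp add: \<beta>_def)
    have ab: "\<alpha> \<noteq> \<beta>" using False by (simp add: \<beta>_def)
    have rb: "rho \<beta> = \<alpha>" by (simp add: \<beta>_def)
    define p where "p = count R \<alpha>"
    have c1: "count Z \<alpha> + count Z \<beta> = count R \<alpha>" if "Z \<in> Sols R" for Z
      using that unfolding Sols_count \<beta>_def by metis
    have c2: "count Z \<beta> + count Z \<alpha> = count R \<beta>" if "Z \<in> Sols R" for Z
      using that unfolding Sols_count by (metis rb)
    have q: "count R \<beta> = p" using c1[OF Z0] c2[OF Z0] p_def by simp
    define F where "F j = replicate_mset j \<alpha> + replicate_mset (p - j) \<beta>" for j
    have cF: "count (F j) x = (if x = \<alpha> then j else 0) + (if x = \<beta> then p - j else 0)" for j x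
      by (auto simp: F_def)
    have out': "count R x = 0" if "x \<noteq> \<alpha>" "x \<noteq> \<beta>" for x
      using out that \<beta>_def by simp
    have S: "Sols R = F ` {0..p}"
    proof
      show "Sols R \<subseteq> F ` {0..p}"
      proof
        fix Z assume Z: "Z \<in> Sols R"
        have "Z = F (count Z \<alpha>)"
        proof (rule multiset_eqI)
          fix x
          show "count Z x = count (F (count Z \<alpha>)) x"
            using c1[OF Z] ab le[OF Z, of x] out'[of x] by (auto simp: cF p_def)
        qed
        moreover have "count Z \<alpha> \<in> {0..p}" using c1[OF Z] by (simp add: p_def)
        ultimately show "Z \<in> F ` {0..p}" by blast
      qed
    next
      show "F ` {0..p} \<subseteq> Sols R"
      proof
        fix Z assume "Z \<in> F ` {0..p}"
        then obtain j where j: "j \<le> p" "Z = F j" by auto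
        have "count Z 0 = 0" using j a0 b0 by (simp add: cF)
        moreover have "count Z x + count Z (rho x) = count R x" for x
        proof -
          consider "x = \<alpha>" | "x = \<beta>" | "x \<noteq> \<alpha>" "x \<noteq> \<beta>" by blast
          then show ?thesis
          proof cases
            case 1
            then show ?thesis using j ab by (simp add: cF \<beta>_def[symmetric] p_def)
          next
            case 2
            then show ?thesis using j ab q by (simp add: cF rb)
          next
            case 3
            have "rho x \<noteq> \<alpha>" using 3 by (metis rb rho_rho)
            moreover have "rho x \<noteq> \<beta>" using 3 by (metis \<beta>_def rho_rho)
            ultimately show ?thesis using 3 j by (simp add: cF out')
          qed
        qed
        ultimately show "Z \<in> Sols R" unfolding Sols_count by blast
      qed
    qed
    have inj: "inj_on F {0..p}"
    proof (rule inj_onI)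
      fix i j assume "F i = F j"
      then have "count (F i) \<alpha> = count (F j) \<alpha>" by simp
      then show "i = j" using ab by (simp add: cF)
    qed
    have card: "card (Sols R) = p + 1" unfolding S using inj by (simp add: card_image)
    have Req: "R = replicate_mset p \<alpha> + replicate_mset p \<beta>"
    proof (rule multiset_eqI)
      fix x show "count R x = count (replicate_mset p \<alpha> + replicate_mset p \<beta>) x"
        using ab q out'[of x] by (auto simp: p_def)
    qed
    have n1: "\<not> (\<exists>x\<in>#R. cmod x = 1)"
    proof
      assume "\<exists>x\<in>#R. cmod x = 1"
      then obtain x where "x \<in># R" "cmod x = 1" by blast
      then have "x = \<alpha> \<or> x = \<beta>" using cls \<beta>_def by auto
      then show False
        using \<open>cmod x = 1\<close> rho_fix_iff[OF a0] rho_fix_iff[OF b0] ab rb \<beta>_def by auto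
    qed
    have "class_count R = p + 1"
      using n1 by (simp add: class_count_def Req)
    then show ?thesis using card S by simp
  qed
qed

definition cl :: "complex \<Rightarrow> complex \<Rightarrow> bool" where
  "cl a x \<longleftrightarrow> x = a \<or> x = rho a"

lemma cl_refl [simp]: "cl a a" by (simp add: cl_def)

lemma cl_rho: "cl a (rho x) = cl a x"
  unfolding cl_def by (metis rho_rho)

lemma cl_same: "cl a x \<Longrightarrow> cl x = cl a"
  unfolding cl_def by (auto simp: fun_eq_iff)

lemma cl_trans: "cl a y \<Longrightarrow> cl x y \<Longrightarrow> cl a x"
  unfolding cl_def by (metis rho_rho)

lemma zclass_cl: "zclass R a = filter_mset (cl a) R"
  unfolding zclass_def by (rule filter_mset_cong) (auto simp: cl_def rho_def)

lemma NN_split: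
  assumes a: "\<alpha> \<in># R"
  shows "NN R = class_count (filter_mset (cl \<alpha>) R) * NN (filter_mset (\<lambda>x. \<not> cl \<alpha> x) R)"
proof -
  define R' where "R' = filter_mset (\<lambda>x. \<not> cl \<alpha> x) R"
  have img: "zclass R ` set_mset R = insert (zclass R \<alpha>) (zclass R' ` set_mset R')"
  proof (intro equalityI subsetI)
    fix y assume "y \<in> zclass R ` set_mset R"
    then obtain x where x: "x \<in># R" "y = zclass R x" by auto
    show "y \<in> insert (zclass R \<alpha>) (zclass R' ` set_mset R')"
    proof (cases "cl \<alpha> x")
      case True
      then have "zclass R x = zclass R \<alpha>" using cl_same[OF True] by (simp add: zclass_cl)
      then show ?thesis using x by simp
    next
      case False
      have "zclass R' x = zclass R x"
        unfolding zclass_cl R'_def filter_filter_mset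
        by (rule filter_mset_cong) (use False cl_trans in auto)
      moreover have "x \<in># R'" using x False by (simp add: R'_def)
      ultimately have "y \<in> zclass R' ` set_mset R'" using x(2) by (metis image_eqI)
      then show ?thesis by simp
    qed
  next
    fix y assume "y \<in> insert (zclass R \<alpha>) (zclass R' ` set_mset R')"
    then consider "y = zclass R \<alpha>" | x where "x \<in># R'" "y = zclass R' x" by auto
    then show "y \<in> zclass R ` set_mset R"
    proof cases
      case 1 then show ?thesis using a by auto
    next
      case 2
      then have F: "\<not> cl \<alpha> x" "x \<in># R" by (auto simp: R'_def)
      have "zclass R' x = zclass R x"
        unfolding zclass_cl R'_def filter_filter_mset
        by (rule filter_mset_cong) (use F cl_trans in auto)
      then show ?thesis using 2 F by auto
    qed
  qed
  have notin: "zclass R \<alpha> \<notin> zclass R' ` set_mset R'"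
  proof
    assume "zclass R \<alpha> \<in> zclass R' ` set_mset R'"
    then obtain x where "zclass R \<alpha> = zclass R' x" by auto
    moreover have "\<alpha> \<in># zclass R \<alpha>" using a by (simp add: zclass_cl)
    ultimately have "\<alpha> \<in># R'" by (simp add: zclass_cl)
    then show False by (simp add: R'_def)
  qed
  have "NN R = (\<Prod>y\<in>insert (zclass R \<alpha>) (zclass R' ` set_mset R'). class_count y)"
    unfolding NN_def img ..
  also have "\<dots> = class_count (zclass R \<alpha>) * NN R'"
    using notin by (simp add: NN_def)
  finally show ?thesis by (simp add: zclass_cl R'_def)
qed

lemma Sols_card: "Sols R \<noteq> {} \<Longrightarrow> finite (Sols R) \<and> card (Sols R) = NN R"
proof (induction "size R" arbitrary: R rule: less_induct)
  case less
  show ?case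
  proof (cases "R = {#}")
    case True
    then show ?thesis by (simp add: Sols_empty NN_def)
  next
    case False
    then obtain \<alpha> where a: "\<alpha> \<in># R" by blast
    obtain Z0 where Z0: "Z0 \<in> Sols R" using less.prems by blast
    define Q where "Q = cl \<alpha>"
    have Q: "\<And>x. Q (rho x) = Q x" by (simp add: Q_def cl_rho)
    have bij: "bij_betw (\<lambda>Z. (filter_mset Q Z, filter_mset (\<lambda>x. \<not> Q x) Z)) (Sols R)
           (Sols (filter_mset Q R) \<times> Sols (filter_mset (\<lambda>x. \<not> Q x) R))"
      by (rule Sols_split[of Q, OF Q])
    have Z1: "filter_mset Q Z0 \<in> Sols (filter_mset Q R)"
      and Z2: "filter_mset (\<lambda>x. \<not> Q x) Z0 \<in> Sols (filter_mset (\<lambda>x. \<not> Q x) R)"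
      using bij_betwE[OF bij] Z0 by auto
    have "size (filter_mset (\<lambda>x. \<not> Q x) R) < size R"
    proof -
      have "size R = size (filter_mset Q R) + size (filter_mset (\<lambda>x. \<not> Q x) R)"
        by (metis multiset_partition size_union)
      moreover have "\<alpha> \<in># filter_mset Q R" using a by (simp add: Q_def)
      then have "filter_mset Q R \<noteq> {#}" by auto
      then have "size (filter_mset Q R) \<noteq> 0" by simp
      ultimately show ?thesis by linarith
    qed
    then have IH: "finite (Sols (filter_mset (\<lambda>x. \<not> Q x) R)) \<and>
        card (Sols (filter_mset (\<lambda>x. \<not> Q x) R)) = NN (filter_mset (\<lambda>x. \<not> Q x) R)"
      using less.hyps Z2 by blast
    have one: "finite (Sols (filter_mset Q R)) \<and> card (Sols (filter_mset Q R)) = class_count (filter_mset Q R)"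
      by (rule one_class[OF Z1, of \<alpha>]) (use a in \<open>auto simp: Q_def cl_def\<close>)
    have fin: "finite (Sols R)"
      using bij_betw_finite[OF bij] IH one by simp
    have "card (Sols R) = card (Sols (filter_mset Q R)) * card (Sols (filter_mset (\<lambda>x. \<not> Q x) R))"
      using bij_betw_same_card[OF bij] by (simp add: card_cartesian_product)
    also have "\<dots> = NN R" using IH one NN_split[OF a] by (simp add: Q_def)
    finally show ?thesis using fin by simp
  qed
qed



definition ff :: "(int \<Rightarrow> complex) \<Rightarrow> int \<Rightarrow> complex" where
  "ff a = lp_sub lp_one (lp_mul a (lp_star a))"

definition Fb :: "(int \<Rightarrow> complex) \<Rightarrow> (int \<Rightarrow> complex) set" where
  "Fb a = {b. lpoly b \<and> lp_mul b (lp_star b) = ff a}"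

lemma lp_add_eq_one_iff: "lp_add X Y = lp_one \<longleftrightarrow> Y = lp_sub lp_one X"
  unfolding lp_add_def lp_sub_def by (auto simp: fun_eq_iff algebra_simps)

lemma S_iff:
  assumes "(a, b0) \<in> S_set"
  shows "(a, b) \<in> S_set \<longleftrightarrow> b \<in> Fb a"
  using assms unfolding S_set_def Fb_def ff_def by (auto simp: lp_add_eq_one_iff)

lemma lss_comp: "lp_scale_shift l k (lp_scale_shift l' k' b) = lp_scale_shift (l * l') (k + k') b"
  by (simp add: lp_scale_shift_def fun_eq_iff diff_diff_eq mult.assoc add.commute)

lemma lss_id [simp]: "lp_scale_shift 1 0 b = b"
  by (simp add: lp_scale_shift_def)

lemma rho_fun: "(\<lambda>z. 1 / cnj z) = rho"
  by (simp add: rho_def fun_eq_iff)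

lemma sum_pairs: "(\<Sum>\<alpha>\<in>#Z. {#\<alpha>, 1 / cnj \<alpha>#}) = Z + image_mset rho Z"
  by (induction Z) (simp_all add: rho_def)

lemma cmod1_iff: "cmod l = 1 \<longleftrightarrow> l * cnj l = 1"
proof -
  have "l * cnj l = 1 \<longleftrightarrow> (cmod l)\<^sup>2 = 1"
    by (metis complex_norm_square of_real_eq_1_iff)
  also have "\<dots> \<longleftrightarrow> cmod l = 1" by (metis norm_ge_zero one_power2 power2_eq_iff_nonneg zero_le_one)
  finally show ?thesis by simp
qed

lemma bbstar_smult:
  "lp_mul (lp_of m (smult l p)) (lp_star (lp_of m (smult l p)))
   = lp_of (- int (degree p)) (smult (l * cnj l) (p * hsh p))"
proof (cases "l = 0")
  case True then show ?thesis by (simp add: lp_mul_zero_left)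
next
  case False
  then show ?thesis by (simp add: bbstar_lp_of hsh_smult ac_simps)
qed

context
  fixes a b0
  assumes S0: "(a, b0) \<in> S_set"
    and nt: "ff a \<noteq> (\<lambda>_. 0)"
begin

lemma b0_Fb: "b0 \<in> Fb a" using S_iff[OF S0] S0 by simp

lemma Fb_nonzero: "b \<in> Fb a \<Longrightarrow> b \<noteq> (\<lambda>_. 0)"
  using nt by (auto simp: Fb_def lp_mul_zero_left)

lemma Fb_nf:
  assumes "b \<in> Fb a"
  obtains m p where "coeff p 0 \<noteq> 0" "b = lp_of m p"
  using lp_normal_form[of b] Fb_nonzero[OF assms] assms by (auto simp: Fb_def)

lemma zeros_Fb:
  assumes "b \<in> Fb a"
  shows "lp_zeros (ff a) = lp_zeros b + image_mset rho (lp_zeros b)"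
    and "0 \<notin># lp_zeros b"
proof -
  obtain m p where p: "coeff p 0 \<noteq> 0" "b = lp_of m p" using Fb_nf[OF assms] .
  have "ff a = lp_mul b (lp_star b)" using assms by (simp add: Fb_def)
  then show "lp_zeros (ff a) = lp_zeros b + image_mset rho (lp_zeros b)"
    using p zeros_bbstar[OF p(1), of m] by (simp add: lp_zeros_lp_of rho_fun)
  show "0 \<notin># lp_zeros b" using p by (simp add: lp_zeros_lp_of coeff0_proots)
qed

lemma orbit_Fb:
  assumes "b \<in> Fb a" "cmod l = 1"
  shows "lp_scale_shift l k b \<in> Fb a"
proof -
  obtain m p where p: "coeff p 0 \<noteq> 0" "b = lp_of m p" using Fb_nf[OF assms(1)] .
  have l1: "l * cnj l = 1" using assms(2) cmod1_iff by blast
  have e: "lp_scale_shift l k b = lp_of (m + k) (smult l p)" by (simp add: p lp_scale_shift_lp_of)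
  have "lp_mul (lp_scale_shift l k b) (lp_star (lp_scale_shift l k b)) = lp_mul b (lp_star b)"
    unfolding e bbstar_smult l1 using p by (simp add: bbstar_lp_of)
  then show ?thesis using assms(1) e lpoly_lp_of by (simp add: Fb_def)
qed

lemma orbit_iff:
  assumes "b \<in> Fb a" "b' \<in> Fb a"
  shows "(\<exists>k l. cmod l = 1 \<and> b' = lp_scale_shift l k b) \<longleftrightarrow> lp_zeros b = lp_zeros b'"
proof -
  obtain m p where p: "coeff p 0 \<noteq> 0" "b = lp_of m p" using Fb_nf[OF assms(1)] .
  obtain m' p' where p': "coeff p' 0 \<noteq> 0" "b' = lp_of m' p'" using Fb_nf[OF assms(2)] .
  show ?thesis
  proof
    assume "\<exists>k l. cmod l = 1 \<and> b' = lp_scale_shift l k b"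
    then obtain k l where kl: "cmod l = 1" "b' = lp_scale_shift l k b" by blast
    have l0: "l \<noteq> 0" using kl by auto
    have "b' = lp_of (m + k) (smult l p)" by (simp add: kl p lp_scale_shift_lp_of)
    moreover have "coeff (smult l p) 0 \<noteq> 0" using l0 p by simp
    ultimately have "lp_zeros b' = proots (smult l p)" by (simp add: lp_zeros_lp_of)
    then show "lp_zeros b = lp_zeros b'" using l0 p by (simp add: lp_zeros_lp_of)
  next
    assume z: "lp_zeros b = lp_zeros b'"
    then have "proots p = proots p'" using p p' by (simp add: lp_zeros_lp_of)
    define c where "c = lead_coeff p' / lead_coeff p"
    have pp': "p' = smult c p"
      using same_proots[OF coeff0_ne[OF p'(1)] coeff0_ne[OF p(1)]] \<open>proots p = proots p'\<close> c_def by simp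
    have c0: "c \<noteq> 0" using pp' coeff0_ne[OF p'(1)] by auto
    have dd: "degree p' = degree p" using pp' c0 by simp
    have "lp_mul b' (lp_star b') = lp_mul b (lp_star b)" using assms by (simp add: Fb_def)
    moreover have "lp_mul b' (lp_star b') = lp_of (- int (degree p)) (smult (c * cnj c) (p * hsh p))"
      unfolding p'(2) pp' by (rule bbstar_smult)
    moreover have "lp_mul b (lp_star b) = lp_of (- int (degree p)) (p * hsh p)"
      unfolding p(2) by (rule bbstar_lp_of)
    ultimately have "lp_of (- int (degree p)) (smult (c * cnj c) (p * hsh p)) = lp_of (- int (degree p)) (p * hsh p)"
      by simp
    then have "smult (c * cnj c) (p * hsh p) = p * hsh p"
      using lp_of_inj coeff0_bbstar[OF p(1)] c0 by (metis coeff_smult mult_eq_0_iff complex_cnj_zero_iff)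
    then have "c * cnj c = 1"
      using coeff0_bbstar[OF p(1)] by (metis coeff_smult mult_cancel_right2)
    then have "cmod c = 1" using cmod1_iff by blast
    moreover have "b' = lp_scale_shift c (m' - m) b"
      using p p' pp' by (simp add: lp_scale_shift_lp_of)
    ultimately show "\<exists>k l. cmod l = 1 \<and> b' = lp_scale_shift l k b" by blast
  qed
qed

end



lemma comp_mem: "(a', c) \<in> component a b \<longleftrightarrow> a' = a \<and> (\<exists>k l. cmod l = 1 \<and> c = lp_scale_shift l k b)"
  by (auto simp: component_def)

lemma comp_orbit:
  assumes "cmod l = 1" "c = lp_scale_shift l k b"
  shows "component a c = component a b"
proof
  show "component a c \<subseteq> component a b"
  proof
    fix x assume "x \<in> component a c"
    then obtain k' l' where x: "x = (a, lp_scale_shift l' k' c)" "cmod l' = 1"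
      by (auto simp: component_def)
    have "lp_scale_shift l' k' c = lp_scale_shift (l' * l) (k' + k) b"
      by (simp add: assms lss_comp)
    moreover have "cmod (l' * l) = 1" using x assms by (simp add: norm_mult)
    ultimately show "x \<in> component a b" using x by (auto simp: component_def)
  qed
next
  show "component a b \<subseteq> component a c"
  proof
    fix x assume "x \<in> component a b"
    then obtain k' l' where x: "x = (a, lp_scale_shift l' k' b)" "cmod l' = 1"
      by (auto simp: component_def)
    have l0: "l \<noteq> 0" using assms by auto
    have "lp_scale_shift (l' / l) (k' - k) c = lp_scale_shift l' k' b"
      using l0 by (simp add: assms lss_comp)
    moreover have "cmod (l' / l) = 1" using x assms by (simp add: norm_divide)
    ultimately show "x \<in> component a c" using x by (auto simp: component_def) (metis)
  qed
qed

lemma card_image_equiv: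
  assumes "\<And>x y. x \<in> A \<Longrightarrow> y \<in> A \<Longrightarrow> g x = g y \<longleftrightarrow> h x = h y"
  shows "card (g ` A) = card (h ` A) \<and> (finite (g ` A) \<longleftrightarrow> finite (h ` A))"
proof -
  define \<phi> where "\<phi> u = g (SOME x. x \<in> A \<and> h x = u)" for u
  have phi: "\<phi> (h x) = g x" if "x \<in> A" for x
  proof -
    have "\<exists>y. y \<in> A \<and> h y = h x" using that by blast
    then have "(SOME y. y \<in> A \<and> h y = h x) \<in> A \<and> h (SOME y. y \<in> A \<and> h y = h x) = h x"
      by (rule someI_ex)
    then show ?thesis unfolding \<phi>_def using assms that by blast
  qed
  have img: "g ` A = \<phi> ` (h ` A)" using phi by (auto simp: image_image)
  have inj: "inj_on \<phi> (h ` A)"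
  proof (rule inj_onI)
    fix u v assume "u \<in> h ` A" "v \<in> h ` A" "\<phi> u = \<phi> v"
    then obtain x y where "x \<in> A" "y \<in> A" "u = h x" "v = h y" "\<phi> (h x) = \<phi> (h y)" by auto
    then show "u = v" using phi assms by metis
  qed
  show ?thesis unfolding img using inj by (simp add: card_image finite_image_iff)
qed

context
  fixes a b0
  assumes S0: "(a, b0) \<in> S_set"
    and nt: "ff a \<noteq> (\<lambda>_. 0)"
begin

lemma converse_c:
  assumes b: "lpoly b" "b \<noteq> (\<lambda>_. 0)"
    and R: "lp_zeros (ff a) = lp_zeros b + image_mset rho (lp_zeros b)"
  shows "\<exists>l. l \<noteq> 0 \<and> lp_scale_shift l 0 b \<in> Fb a"
proof -
  obtain m p where p: "coeff p 0 \<noteq> 0" "b = lp_of m p" using lp_normal_form[OF b] by blast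
  obtain m0 p0 where p0: "coeff p0 0 \<noteq> 0" "b0 = lp_of m0 p0" using Fb_nf[OF S0 nt b0_Fb[OF S0 nt]] by blast
  define P where "P = p * hsh p"
  define Q0 where "Q0 = p0 * hsh p0"
  have f: "ff a = lp_of (- int (degree p0)) Q0"
    using b0_Fb[OF S0 nt] p0 by (simp add: Fb_def bbstar_lp_of Q0_def)
  have cP: "coeff P 0 \<noteq> 0" using coeff0_bbstar[OF p(1)] by (simp add: P_def)
  have cQ: "coeff Q0 0 \<noteq> 0" using coeff0_bbstar[OF p0(1)] by (simp add: Q0_def)
  have "proots P = proots p + image_mset rho (proots p)"
    using p(1) coeff0_ne[OF p(1)] by (simp add: P_def proots_mult proots_hsh rho_fun)
  also have "\<dots> = lp_zeros (ff a)" using R p by (simp add: lp_zeros_lp_of)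
  also have "\<dots> = proots Q0" using f cQ by (simp add: lp_zeros_lp_of)
  finally have pr: "proots P = proots Q0" .
  define c where "c = lead_coeff P / lead_coeff Q0"
  have PQ: "P = smult c Q0" using same_proots[OF coeff0_ne[OF cP] coeff0_ne[OF cQ] pr] c_def by simp
  have c0: "c \<noteq> 0" using PQ coeff0_ne[OF cP] by auto
  have dP: "degree P = degree p + degree p"
    using coeff0_ne[OF p(1)] degree_hsh[OF p(1)] by (simp add: P_def degree_mult_eq)
  have dQ: "degree Q0 = degree p0 + degree p0"
    using coeff0_ne[OF p0(1)] degree_hsh[OF p0(1)] by (simp add: Q0_def degree_mult_eq)
  have dd: "degree p = degree p0" using dP dQ PQ c0 by simp
  have bb: "lp_mul b (lp_star b) = (\<lambda>n. c * ff a n)"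
    using p by (simp add: bbstar_lp_of P_def[symmetric] PQ lp_of_smult f dd)
  define sb where "sb = (\<Sum>k\<in>{k. b k \<noteq> 0}. (cmod (b k))\<^sup>2)"
  define s0 where "s0 = (\<Sum>k\<in>{k. b0 k \<noteq> 0}. (cmod (b0 k))\<^sup>2)"
  have lb0: "lpoly b0" "b0 \<noteq> (\<lambda>_. 0)" using b0_Fb[OF S0 nt] Fb_nonzero[OF S0 nt b0_Fb[OF S0 nt]]
    by (auto simp: Fb_def)
  have sb: "sb > 0" unfolding sb_def by (rule bbstar_at0_pos[OF b])
  have s0: "s0 > 0" unfolding s0_def by (rule bbstar_at0_pos[OF lb0])
  have f0: "ff a 0 = of_real s0"
    using b0_Fb[OF S0 nt] bbstar_at0[OF lb0(1)] by (simp add: Fb_def s0_def)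
  have "of_real sb = c * of_real s0"
    using bb bbstar_at0[OF b(1)] f0 sb_def by (metis)
  then have cr: "c = of_real (sb / s0)" using s0 by (simp add: field_simps)
  define r where "r = sb / s0"
  have r: "r > 0" using sb s0 by (simp add: r_def)
  define l where "l = complex_of_real (1 / sqrt r)"
  have l0: "l \<noteq> 0" using r by (simp add: l_def)
  have sq: "complex_of_real r = (complex_of_real (sqrt r))\<^sup>2"
    using r by (simp flip: of_real_power)
  have ll: "l * cnj l * c = 1"
    using r sq by (simp add: l_def cr r_def[symmetric] power2_eq_square[symmetric] field_simps flip: of_real_mult)
  have e: "lp_scale_shift l 0 b = lp_of m (smult l p)" by (simp add: p lp_scale_shift_lp_of)
  have "lp_mul (lp_scale_shift l 0 b) (lp_star (lp_scale_shift l 0 b))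
      = lp_of (- int (degree p)) (smult (l * cnj l) P)"
    unfolding e bbstar_smult P_def ..
  also have "\<dots> = lp_of (- int (degree p0)) Q0" using ll by (simp add: PQ dd)
  also have "\<dots> = ff a" using f by simp
  finally show ?thesis using l0 e lpoly_lp_of by (auto simp: Fb_def)
qed

end



context
  fixes a b0
  assumes S0: "(a, b0) \<in> S_set"
    and nt: "ff a \<noteq> (\<lambda>_. 0)"
begin

lemma comp_eq_iff:
  assumes b: "b \<in> Fb a" and b': "b' \<in> Fb a"
  shows "component a b = component a b' \<longleftrightarrow> lp_zeros b = lp_zeros b'"
proof
  assume eq: "component a b = component a b'"
  have "(a, b') \<in> component a b'" unfolding comp_mem by (metis lss_id norm_one)
  then have "(a, b') \<in> component a b" using eq by simp
  then have "\<exists>k l. cmod l = 1 \<and> b' = lp_scale_shift l k b" by (simp add: comp_mem)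
  then show "lp_zeros b = lp_zeros b'" using orbit_iff[OF S0 nt b b'] by blast
next
  assume "lp_zeros b = lp_zeros b'"
  then obtain k l where "cmod l = 1" "b' = lp_scale_shift l k b" using orbit_iff[OF S0 nt b b'] by blast
  then show "component a b = component a b'" using comp_orbit by metis
qed

end

lemma T_filter:
  "filter_mset (\<lambda>z. cmod z = 1) (Z + image_mset rho Z)
   = filter_mset (\<lambda>z. cmod z = 1) Z + filter_mset (\<lambda>z. cmod z = 1) Z"
proof -
  have pr: "(\<lambda>z. cmod (rho z) = 1) = (\<lambda>z. cmod z = 1)"
    by (auto simp: fun_eq_iff cmod_rho divide_eq_1_iff)
  have "filter_mset (\<lambda>z. cmod z = 1) (image_mset rho Z)
      = image_mset rho (filter_mset (\<lambda>z. cmod (rho z) = 1) Z)"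
    by (rule image_mset_filter_mset_swap[symmetric])
  also have "\<dots> = image_mset rho (filter_mset (\<lambda>z. cmod z = 1) Z)" by (simp only: pr)
  also have "\<dots> = image_mset (\<lambda>x. x) (filter_mset (\<lambda>z. cmod z = 1) Z)"
  proof (rule image_mset_cong)
    fix x assume "x \<in># filter_mset (\<lambda>z. cmod z = 1) Z"
    then have "cmod x = 1" by simp
    moreover then have "x \<noteq> 0" by auto
    ultimately show "rho x = x" using rho_fix_iff by blast
  qed
  finally show ?thesis by simp
qed

lemma double_eq: "X + X = Y + (Y :: 'a multiset) \<Longrightarrow> X = Y"
proof (rule multiset_eqI)
  fix x assume "X + X = Y + Y"
  then have "count (X + X) x = count (Y + Y) x" by simp
  then show "count X x = count Y x" by simp
qed

theorem lemmaA3: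
  fixes a :: "int \<Rightarrow> complex"
  assumes aA: "a \<in> A_set"
    and nontriv: "lp_sub lp_one (lp_mul a (lp_star a)) \<noteq> (\<lambda>_. 0)"
  shows
    "(let R = lp_zeros (lp_sub lp_one (lp_mul a (lp_star a)));
          F = {p \<in> S_set. fst p = a};
          C = {component a b | b. (a, b) \<in> F}
      in \<Union>C = F
       \<and> (\<forall>X\<in>C. \<forall>Y\<in>C. X \<noteq> Y \<longrightarrow> X \<inter> Y = {})
       \<and> finite C \<and> card C = NN R
       \<and> (\<forall>X\<in>C. \<exists>f. bij_betw f ((UNIV :: int set) \<times> {z::complex. cmod z = 1}) X)
       \<and> (\<forall>b b'. (a, b) \<in> F \<longrightarrow> (a, b') \<in> F \<longrightarrow>
            (component a b \<noteq> component a b' \<longleftrightarrow> lp_zeros b \<noteq> lp_zeros b')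
          \<and> filter_mset (\<lambda>z. cmod z = 1) (lp_zeros b)
              = filter_mset (\<lambda>z. cmod z = 1) (lp_zeros b'))
       \<and> (\<forall>b. lpoly b \<longrightarrow> b \<noteq> (\<lambda>_. 0) \<longrightarrow>
            ((a, b) \<in> S_set \<longrightarrow> R = (\<Sum>\<alpha>\<in>#lp_zeros b. {#\<alpha>, 1 / cnj \<alpha>#}))
          \<and> (R = (\<Sum>\<alpha>\<in>#lp_zeros b. {#\<alpha>, 1 / cnj \<alpha>#}) \<longrightarrow>
               (\<exists>l. l \<noteq> 0 \<and> (a, lp_scale_shift l 0 b) \<in> S_set))))"
proof -
  obtain b0 where S0: "(a, b0) \<in> S_set" using aA unfolding A_set_def by force
  have nt: "ff a \<noteq> (\<lambda>_. 0)" using nontriv by (simp add: ff_def)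
  define R where "R = lp_zeros (ff a)"
  define F where "F = {p \<in> S_set. fst p = a}"
  define C where "C = {component a b | b. (a, b) \<in> F}"
  have Fmem: "(x, b) \<in> F \<longleftrightarrow> x = a \<and> b \<in> Fb a" for x b
    using S_iff[OF S0] by (auto simp: F_def)
  have CFb: "C = (\<lambda>b. component a b) ` Fb a" by (auto simp: C_def Fmem)
  have Rb: "R = lp_zeros b + image_mset rho (lp_zeros b)" if "b \<in> Fb a" for b
    using zeros_Fb(1)[OF S0 nt that] R_def by simp
  have A1: "\<Union>C = F"
  proof
    show "\<Union>C \<subseteq> F"
    proof
      fix x assume "x \<in> \<Union>C"
      then obtain b where b: "b \<in> Fb a" "x \<in> component a b" using CFb by auto
      then obtain k l where "x = (a, lp_scale_shift l k b)" "cmod l = 1"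
        by (auto simp: component_def)
      then show "x \<in> F" using orbit_Fb[OF S0 nt b(1)] Fmem by auto
    qed
    show "F \<subseteq> \<Union>C"
    proof
      fix x assume x: "x \<in> F"
      obtain b where xb: "x = (a, b)" using x by (cases x) (auto simp: F_def)
      have b: "b \<in> Fb a" using x xb Fmem by simp
      have "x \<in> component a b" unfolding xb comp_mem by (metis lss_id norm_one)
      then show "x \<in> \<Union>C" using b CFb by auto
    qed
  qed
  have A2: "\<forall>X\<in>C. \<forall>Y\<in>C. X \<noteq> Y \<longrightarrow> X \<inter> Y = {}"
  proof (intro ballI impI)
    fix X Y assume X: "X \<in> C" and Y: "Y \<in> C" and ne: "X \<noteq> Y"
    obtain b where b: "b \<in> Fb a" "X = component a b" using X CFb by auto
    obtain b' where b': "b' \<in> Fb a" "Y = component a b'" using Y CFb by auto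
    show "X \<inter> Y = {}"
    proof (rule ccontr)
      assume "X \<inter> Y \<noteq> {}"
      then obtain z where z: "z \<in> component a b" "z \<in> component a b'" using b b' by auto
      obtain c where zc: "z = (a, c)" using z by (auto simp: component_def)
      obtain k l where kl: "cmod l = 1" "c = lp_scale_shift l k b" using z zc comp_mem by blast
      obtain k' l' where kl': "cmod l' = 1" "c = lp_scale_shift l' k' b'" using z zc comp_mem by blast
      have "component a c = component a b" using comp_orbit[OF kl] .
      moreover have "component a c = component a b'" using comp_orbit[OF kl'] .
      ultimately show False using ne b b' by simp
    qed
  qed
  have Sols: "lp_zeros ` Fb a = Sols R"
  proof
    show "lp_zeros ` Fb a \<subseteq> Sols R"
      using zeros_Fb[OF S0 nt] Rb by (auto simp: Sols_def)
    show "Sols R \<subseteq> lp_zeros ` Fb a"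
    proof
      fix Z assume Z: "Z \<in> Sols R"
      define p where "p = (\<Prod>x\<in>#Z. [:-x, 1:])"
      have cp: "coeff p 0 \<noteq> 0" unfolding p_def by (rule coeff0_prod_linear) (use Z in \<open>simp add: Sols_def\<close>)
      define b where "b = lp_of 0 p"
      have zb: "lp_zeros b = Z" using cp by (simp add: b_def lp_zeros_lp_of p_def proots_prod_linear)
      have lb: "lpoly b" "b \<noteq> (\<lambda>_. 0)" using lpoly_lp_of coeff0_ne[OF cp] by (auto simp: b_def lp_of_eq_0_iff)
      have "lp_zeros (ff a) = lp_zeros b + image_mset rho (lp_zeros b)"
        using Z zb by (simp add: Sols_def R_def)
      then obtain l where l: "l \<noteq> 0" "lp_scale_shift l 0 b \<in> Fb a" using converse_c[OF S0 nt lb] by blast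
      have "lp_scale_shift l 0 b = lp_of 0 (smult l p)" by (simp add: b_def lp_scale_shift_lp_of)
      then have "lp_zeros (lp_scale_shift l 0 b) = Z"
        using l cp by (simp add: lp_zeros_lp_of zb[symmetric] b_def)
      then show "Z \<in> lp_zeros ` Fb a" using l by force
    qed
  qed
  have A3: "finite C \<and> card C = NN R"
  proof -
    have eqv: "card ((\<lambda>b. component a b) ` Fb a) = card (lp_zeros ` Fb a) \<and>
        (finite ((\<lambda>b. component a b) ` Fb a) \<longleftrightarrow> finite (lp_zeros ` Fb a))"
      by (rule card_image_equiv) (rule comp_eq_iff[OF S0 nt])
    have "Sols R \<noteq> {}" using Sols b0_Fb[OF S0 nt] by auto
    then have "finite (Sols R) \<and> card (Sols R) = NN R" by (rule Sols_card)
    then show ?thesis using eqv CFb Sols by simp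
  qed
  have A4: "\<forall>X\<in>C. \<exists>f. bij_betw f ((UNIV :: int set) \<times> {z::complex. cmod z = 1}) X"
  proof
    fix X assume "X \<in> C"
    then obtain b where b: "b \<in> Fb a" "X = component a b" using CFb by auto
    obtain m p where p: "coeff p 0 \<noteq> 0" "b = lp_of m p" using Fb_nf[OF S0 nt b(1)] .
    define g where "g = (\<lambda>(k::int, l::complex). (a, lp_scale_shift l k b))"
    have "bij_betw g ((UNIV :: int set) \<times> {z::complex. cmod z = 1}) X"
    proof (rule bij_betw_imageI)
      show "inj_on g ((UNIV :: int set) \<times> {z::complex. cmod z = 1})"
      proof (rule inj_onI)
        fix x y assume x: "x \<in> (UNIV :: int set) \<times> {z::complex. cmod z = 1}"
          and y: "y \<in> (UNIV :: int set) \<times> {z::complex. cmod z = 1}" and gxy: "g x = g y"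
        obtain k l where xkl: "x = (k, l)" by (cases x)
        obtain k' l' where ykl: "y = (k', l')" by (cases y)
        have l0: "l \<noteq> 0" "l' \<noteq> 0" using x y xkl ykl by auto
        have "lp_of (m + k) (smult l p) = lp_of (m + k') (smult l' p)"
          using gxy xkl ykl p by (simp add: g_def lp_scale_shift_lp_of)
        then have "m + k = m + k' \<and> smult l p = smult l' p"
          by (rule lp_of_inj) (use l0 p in simp_all)
        then have "k = k'" "coeff (smult l p) 0 = coeff (smult l' p) 0" by simp_all
        then have "k = k'" "l = l'" using p by simp_all
        then show "x = y" using xkl ykl by simp
      qed
      show "g ` ((UNIV :: int set) \<times> {z::complex. cmod z = 1}) = X"
        unfolding b(2) g_def component_def by auto
    qed
    then show "\<exists>f. bij_betw f ((UNIV :: int set) \<times> {z::complex. cmod z = 1}) X" by blast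
  qed
  have A5: "\<forall>b b'. (a, b) \<in> F \<longrightarrow> (a, b') \<in> F \<longrightarrow>
            (component a b \<noteq> component a b' \<longleftrightarrow> lp_zeros b \<noteq> lp_zeros b')
          \<and> filter_mset (\<lambda>z. cmod z = 1) (lp_zeros b)
              = filter_mset (\<lambda>z. cmod z = 1) (lp_zeros b')"
  proof (intro allI impI conjI)
    fix b b' assume b: "(a, b) \<in> F" and b': "(a, b') \<in> F"
    then have bF: "b \<in> Fb a" "b' \<in> Fb a" using Fmem by auto
    show "component a b \<noteq> component a b' \<longleftrightarrow> lp_zeros b \<noteq> lp_zeros b'"
      using comp_eq_iff[OF S0 nt bF] by simp
    have "filter_mset (\<lambda>z. cmod z = 1) R = filter_mset (\<lambda>z. cmod z = 1) (lp_zeros b) + filter_mset (\<lambda>z. cmod z = 1) (lp_zeros b)"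
      using Rb[OF bF(1)] T_filter by simp
    moreover have "filter_mset (\<lambda>z. cmod z = 1) R = filter_mset (\<lambda>z. cmod z = 1) (lp_zeros b') + filter_mset (\<lambda>z. cmod z = 1) (lp_zeros b')"
      using Rb[OF bF(2)] T_filter by simp
    ultimately show "filter_mset (\<lambda>z. cmod z = 1) (lp_zeros b) = filter_mset (\<lambda>z. cmod z = 1) (lp_zeros b')"
      using double_eq by metis
  qed
  have A6: "\<forall>b. lpoly b \<longrightarrow> b \<noteq> (\<lambda>_. 0) \<longrightarrow>
            ((a, b) \<in> S_set \<longrightarrow> R = (\<Sum>\<alpha>\<in>#lp_zeros b. {#\<alpha>, 1 / cnj \<alpha>#}))
          \<and> (R = (\<Sum>\<alpha>\<in>#lp_zeros b. {#\<alpha>, 1 / cnj \<alpha>#}) \<longrightarrow>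
               (\<exists>l. l \<noteq> 0 \<and> (a, lp_scale_shift l 0 b) \<in> S_set))"
  proof (intro allI impI conjI)
    fix b assume lb: "lpoly b" "b \<noteq> (\<lambda>_. 0)"
    show "R = (\<Sum>\<alpha>\<in>#lp_zeros b. {#\<alpha>, 1 / cnj \<alpha>#})" if "(a, b) \<in> S_set"
      using that S_iff[OF S0] Rb by (simp add: sum_pairs)
    show "\<exists>l. l \<noteq> 0 \<and> (a, lp_scale_shift l 0 b) \<in> S_set" if "R = (\<Sum>\<alpha>\<in>#lp_zeros b. {#\<alpha>, 1 / cnj \<alpha>#})"
      using that converse_c[OF S0 nt lb] S_iff[OF S0] by (simp add: sum_pairs R_def)
  qed
  have main: "\<Union>C = F
       \<and> (\<forall>X\<in>C. \<forall>Y\<in>C. X \<noteq> Y \<longrightarrow> X \<inter> Y = {})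
       \<and> finite C \<and> card C = NN R
       \<and> (\<forall>X\<in>C. \<exists>f. bij_betw f ((UNIV :: int set) \<times> {z::complex. cmod z = 1}) X)
       \<and> (\<forall>b b'. (a, b) \<in> F \<longrightarrow> (a, b') \<in> F \<longrightarrow>
            (component a b \<noteq> component a b' \<longleftrightarrow> lp_zeros b \<noteq> lp_zeros b')
          \<and> filter_mset (\<lambda>z. cmod z = 1) (lp_zeros b)
              = filter_mset (\<lambda>z. cmod z = 1) (lp_zeros b'))
       \<and> (\<forall>b. lpoly b \<longrightarrow> b \<noteq> (\<lambda>_. 0) \<longrightarrow>
            ((a, b) \<in> S_set \<longrightarrow> R = (\<Sum>\<alpha>\<in>#lp_zeros b. {#\<alpha>, 1 / cnj \<alpha>#}))
          \<and> (R = (\<Sum>\<alpha>\<in>#lp_zeros b. {#\<alpha>, 1 / cnj \<alpha>#}) \<longrightarrow>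
               (\<exists>l. l \<noteq> 0 \<and> (a, lp_scale_shift l 0 b) \<in> S_set)))"
    using A1 A2 A3 A4 A5 A6 by blast
  show ?thesis unfolding Let_def using main unfolding R_def F_def C_def ff_def .
qed


end
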